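(* Let $(\Sigma_+,\Sigma_-,N_1,N_2,N_3)$ be a solution of the Wainwright–Hsu system satisfying the constraint, with $N_1<0$ and $N_2,N_3>0$. Then $N_1(N_2+N_3)$ does not converge to $0$ as $\tau\to\infty$.
   Context: Wainwright–Hsu system: for functions $N_1,N_2,N_3,\Sigma_+,\Sigma_-$ of $\tau\in\mathbb{R}$ (prime denotes $d/d\tau$), $N_1'=(q-4\Sigma_+)N_1$, $N_2'=(q+2\Sigma_++2\sqrt3\Sigma_-)N_2$, $N_3'=(q+2\Sigma_+-2\sqrt3\Sigma_-)N_3$, $\Sigma_+'=-(2-q)\Sigma_+-3S_+$, $\Sigma_-'=-(2-q)\Sigma_--3S_-$, where $q=2(\Sigma_+^2+\Sigma_-^2)$, $S_+=\frac12[(N_2-N_3)^2-N_1(2N_1-N_2-N_3)]$, $S_-=\frac{\sqrt3}{2}(N_3-N_2)(N_1-N_2-N_3)$, together with the constraint $\Sigma_+^2+\Sigma_-^2+\frac34[N_1^2+N_2^2+N_3^2-2(N_1N_2+N_2N_3+N_1N_3)]=1$. Solutions with these sign conditions exist for all $\tau\in\mathbb{R}$. *)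

theory Defs
  imports "HOL-Analysis.Analysis"
begin

definition wh_q :: "real \<Rightarrow> real \<Rightarrow> real" where
  "wh_q Sp Sm = 2 * (Sp^2 + Sm^2)"

definition wh_Sp :: "real \<Rightarrow> real \<Rightarrow> real \<Rightarrow> real" where
  "wh_Sp n1 n2 n3 = (1/2) * ((n2 - n3)^2 - n1 * (2*n1 - n2 - n3))"

definition wh_Sm :: "real \<Rightarrow> real \<Rightarrow> real \<Rightarrow> real" where
  "wh_Sm n1 n2 n3 = (sqrt 3 / 2) * (n3 - n2) * (n1 - n2 - n3)"

definition wh_solution ::
  "(real \<Rightarrow> real) \<Rightarrow> (real \<Rightarrow> real) \<Rightarrow> (real \<Rightarrow> real) \<Rightarrow> (real \<Rightarrow> real) \<Rightarrow> (real \<Rightarrow> real) \<Rightarrow> bool" where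
  "wh_solution N1 N2 N3 Sp Sm \<longleftrightarrow>
     (\<forall>t. (N1 has_real_derivative ((wh_q (Sp t) (Sm t) - 4 * Sp t) * N1 t)) (at t)
        \<and> (N2 has_real_derivative ((wh_q (Sp t) (Sm t) + 2 * Sp t + 2 * sqrt 3 * Sm t) * N2 t)) (at t)
        \<and> (N3 has_real_derivative ((wh_q (Sp t) (Sm t) + 2 * Sp t - 2 * sqrt 3 * Sm t) * N3 t)) (at t)
        \<and> (Sp has_real_derivative (- (2 - wh_q (Sp t) (Sm t)) * Sp t - 3 * wh_Sp (N1 t) (N2 t) (N3 t))) (at t)
        \<and> (Sm has_real_derivative (- (2 - wh_q (Sp t) (Sm t)) * Sm t - 3 * wh_Sm (N1 t) (N2 t) (N3 t))) (at t)
        \<and> (Sp t)^2 + (Sm t)^2 + (3/4) * ((N1 t)^2 + (N2 t)^2 + (N3 t)^2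
              - 2 * (N1 t * N2 t + N2 t * N3 t + N1 t * N3 t)) = 1)"

end

theory Submission
  imports Defs
begin

lemma pw_bound:
  fixes n1 n2 n3 s m :: real
  assumes "n1 < 0" "n2 > 0" "n3 > 0"
    and c: "s^2 + m^2 + (3/4) * (n1^2 + n2^2 + n3^2 - 2 * (n1 * n2 + n2 * n3 + n1 * n3)) = 1"
  shows "s^2 + m^2 \<le> 1"
proof -
  have z: "n1 * (n2 + n3) < 0" using assms by (simp add: mult_neg_pos)
  have e: "n1^2 + n2^2 + n3^2 - 2 * (n1 * n2 + n2 * n3 + n1 * n3)
     = n1^2 + (n2 - n3)^2 - 2 * (n1 * (n2 + n3))" by (simp add: power2_eq_square algebra_simps)
  have "0 \<le> n1^2 + (n2 - n3)^2" by simp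
  then have "n1^2 + n2^2 + n3^2 - 2 * (n1 * n2 + n2 * n3 + n1 * n3) \<ge> 0" using e z by linarith
  moreover obtain X where "X = n1^2 + n2^2 + n3^2 - 2 * (n1 * n2 + n2 * n3 + n1 * n3)" by blast
  ultimately show ?thesis using c by (metis add_le_same_cancel1 mult_nonneg_nonneg zero_le_divide_iff zero_le_numeral add_increasing2 order_refl)
qed

lemma pw_sp:
  fixes n1 n2 n3 s m :: real
  assumes c: "s^2 + m^2 + (3/4) * (n1^2 + n2^2 + n3^2 - 2 * (n1 * n2 + n2 * n3 + n1 * n3)) = 1"
  shows "- (2 - wh_q s m) * s - 3 * wh_Sp n1 n2 n3
     = - (2 - wh_q s m) * (1 + s) + (9/2) * n1^2 - (9/2) * (n1 * (n2 + n3))" (is "?lhs = ?rhs")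
proof -
  have "?lhs - ?rhs
    = 2 * (1 - (s^2 + m^2 + (3/4) * (n1^2 + n2^2 + n3^2 - 2 * (n1 * n2 + n2 * n3 + n1 * n3))))"
    by (simp add: wh_q_def wh_Sp_def power2_eq_square field_simps)
  then have "?lhs - ?rhs = 0" by (simp only: c) simp
  then show ?thesis by simp
qed

lemma pw_key:
  fixes s m :: real
  assumes "s^2 + m^2 \<le> 1"
  shows "wh_q s m - s \<ge> 1 - (2 - wh_q s m) * (1 + s)"
proof -
  have e: "wh_q s m - s - (1 - (2 - wh_q s m) * (1 + s)) = 1 + s - 2 * (s * (s^2 + m^2))"
    by (simp add: wh_q_def power2_eq_square algebra_simps)
  have "s^2 \<le> 1" using assms by (smt (verit) zero_le_power2)
  then have sa: "\<bar>s\<bar> \<le> 1" by (simp add: abs_square_le_1)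
  show ?thesis
  proof (cases "s \<ge> 0")
    case True
    then have "s * (s^2 + m^2) \<le> s * 1" using assms by (intro mult_left_mono) auto
    then show ?thesis using e sa by linarith
  next
    case False
    then have "s * (s^2 + m^2) \<le> 0" by (intro mult_nonpos_nonneg) auto
    then show ?thesis using e sa by linarith
  qed
qed


theorem mainTheorem15:
  fixes N1 N2 N3 Sp Sm :: "real \<Rightarrow> real"
  assumes "wh_solution N1 N2 N3 Sp Sm"
    and "\<forall>t. N1 t < 0" and "\<forall>t. N2 t > 0" and "\<forall>t. N3 t > 0"
  shows "\<not> ((\<lambda>t. N1 t * (N2 t + N3 t)) \<longlongrightarrow> 0) at_top"
proof
  assume lim: "((\<lambda>t. N1 t * (N2 t + N3 t)) \<longlongrightarrow> 0) at_top"
  define q where "q t = wh_q (Sp t) (Sm t)" for t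
  define Z where "Z t = N1 t * (N2 t + N3 t)" for t
  define P where "P t = N1 t * N1 t * N2 t * N3 t" for t
  define R where "R t = - (N1 t * N2 t * N3 t)" for t
  have n1: "N1 t < 0" and n2: "N2 t > 0" and n3: "N3 t > 0" for t using assms by auto
  have sol: "\<forall>t. (N1 has_real_derivative ((q t - 4 * Sp t) * N1 t)) (at t)
        \<and> (N2 has_real_derivative ((q t + 2 * Sp t + 2 * sqrt 3 * Sm t) * N2 t)) (at t)
        \<and> (N3 has_real_derivative ((q t + 2 * Sp t - 2 * sqrt 3 * Sm t) * N3 t)) (at t)
        \<and> (Sp has_real_derivative (- (2 - q t) * Sp t - 3 * wh_Sp (N1 t) (N2 t) (N3 t))) (at t)
        \<and> (Sp t)^2 + (Sm t)^2 + (3/4) * ((N1 t)^2 + (N2 t)^2 + (N3 t)^2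
              - 2 * (N1 t * N2 t + N2 t * N3 t + N1 t * N3 t)) = 1"
    using assms(1) unfolding wh_solution_def q_def by blast
  have d1: "(N1 has_real_derivative ((q t - 4 * Sp t) * N1 t)) (at t)"
   and d2: "(N2 has_real_derivative ((q t + 2 * Sp t + 2 * sqrt 3 * Sm t) * N2 t)) (at t)"
   and d3: "(N3 has_real_derivative ((q t + 2 * Sp t - 2 * sqrt 3 * Sm t) * N3 t)) (at t)"
   and dsp0: "(Sp has_real_derivative (- (2 - q t) * Sp t - 3 * wh_Sp (N1 t) (N2 t) (N3 t))) (at t)"
   and con: "(Sp t)^2 + (Sm t)^2 + (3/4) * ((N1 t)^2 + (N2 t)^2 + (N3 t)^2
              - 2 * (N1 t * N2 t + N2 t * N3 t + N1 t * N3 t)) = 1" for t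
    using sol by blast+
  have dsp: "(Sp has_real_derivative (- (2 - q t) * (1 + Sp t) + (9/2) * (N1 t)^2 - (9/2) * Z t)) (at t)" for t
    using dsp0[of t] pw_sp[OF con[of t]] unfolding q_def Z_def by simp
  have sq: "(Sp t)^2 + (Sm t)^2 \<le> 1" for t using pw_bound[OF n1 n2 n3 con] .
  have key: "q t - Sp t \<ge> 1 - (2 - q t) * (1 + Sp t)" for t
    unfolding q_def using pw_key[OF sq] .
  have spb: "\<bar>Sp t\<bar> \<le> 1" for t
  proof -
    have "(Sp t)^2 \<le> 1" using sq[of t] by (smt (verit) zero_le_power2)
    then show ?thesis by (simp add: abs_square_le_1)
  qed
  have qnn: "q t \<ge> 0" for t unfolding q_def wh_q_def by simp
  have Rpos: "R t > 0" for t unfolding R_def using n1[of t] n2[of t] n3[of t]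
    by (simp add: mult_neg_pos)
  have dR: "(R has_real_derivative (3 * q t * R t)) (at t)" for t
  proof -
    have "(R has_real_derivative (- ((q t - 4 * Sp t) * N1 t * N2 t * N3 t
        + N1 t * ((q t + 2 * Sp t + 2 * sqrt 3 * Sm t) * N2 t) * N3 t
        + N1 t * N2 t * ((q t + 2 * Sp t - 2 * sqrt 3 * Sm t) * N3 t)))) (at t)"
      unfolding R_def by (auto intro!: derivative_eq_intros d1 d2 d3 simp: algebra_simps)
    moreover have "- ((q t - 4 * Sp t) * N1 t * N2 t * N3 t
        + N1 t * ((q t + 2 * Sp t + 2 * sqrt 3 * Sm t) * N2 t) * N3 t
        + N1 t * N2 t * ((q t + 2 * Sp t - 2 * sqrt 3 * Sm t) * N3 t)) = 3 * q t * R t"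
      unfolding R_def by (simp add: algebra_simps)
    ultimately show ?thesis by simp
  qed
  have Rmono: "R 0 \<le> R t" if "0 \<le> t" for t
    using that
  proof (rule DERIV_nonneg_imp_nondecreasing)
    fix x
    have "0 \<le> 3 * q x * R x" using qnn[of x] Rpos[of x] by simp
    then show "\<exists>y. (R has_real_derivative y) (at x) \<and> 0 \<le> y" using dR[of x] by blast
  qed
  have PZ: "P t \<le> (Z t)^2 / 4" for t
  proof -
    have "4 * (N2 t * N3 t) \<le> (N2 t + N3 t)^2"
    proof -
      have "(N2 t + N3 t)^2 - 4 * (N2 t * N3 t) = (N2 t - N3 t)^2" by (simp add: power2_eq_square algebra_simps)
      moreover have "(N2 t - N3 t)^2 \<ge> 0" by simp
      ultimately show ?thesis by linarith
    qed
    then have "(N1 t)^2 * (4 * (N2 t * N3 t)) \<le> (N1 t)^2 * (N2 t + N3 t)^2"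
      by (intro mult_left_mono) auto
    then show ?thesis unfolding P_def Z_def by (simp add: power2_eq_square algebra_simps)
  qed
  have PR: "P t = \<bar>N1 t\<bar> * R t" for t
    unfolding P_def R_def using n1[of t] by (simp add: algebra_simps)
  define \<delta> where "\<delta> = min (1/9) (min 1 (R 0))"
  have dpos: "\<delta> > 0" unfolding \<delta>_def using Rpos[of 0] by simp
  from lim have "eventually (\<lambda>t. \<bar>Z t\<bar> < \<delta>) at_top"
    unfolding Z_def using dpos by (auto dest!: tendstoD[where e=\<delta>] simp: dist_real_def)
  then obtain T1 where T1: "\<And>t. t \<ge> T1 \<Longrightarrow> \<bar>Z t\<bar> < \<delta>"
    by (auto simp: eventually_at_top_linorder)
  define T0 where "T0 = max T1 0"
  have small: "(N1 t)^2 \<le> 1/16 \<and> \<bar>Z t\<bar> \<le> 1/9" if "t \<ge> T0" for t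
  proof -
    have tz: "\<bar>Z t\<bar> < \<delta>" using T1 that unfolding T0_def by auto
    have z1: "\<bar>Z t\<bar> \<le> 1/9" "\<bar>Z t\<bar> \<le> 1" "\<bar>Z t\<bar> \<le> R 0" using tz unfolding \<delta>_def by auto
    have "(Z t)^2 = \<bar>Z t\<bar> * \<bar>Z t\<bar>" by (simp add: power2_eq_square)
    also have "\<dots> \<le> 1 * R 0" using z1 by (intro mult_mono) auto
    finally have "(Z t)^2 \<le> R 0" by simp
    then have "P t \<le> R 0 / 4" using PZ[of t] by simp
    moreover have "\<bar>N1 t\<bar> * R 0 \<le> \<bar>N1 t\<bar> * R t"
      using Rmono[of t] that unfolding T0_def by (intro mult_left_mono) auto
    ultimately have "\<bar>N1 t\<bar> * R 0 \<le> R 0 / 4" using PR[of t] by simp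
    then have a: "\<bar>N1 t\<bar> \<le> 1/4" using Rpos[of 0] by (simp add: field_simps)
    have "(N1 t)^2 = \<bar>N1 t\<bar> * \<bar>N1 t\<bar>" by (simp add: power2_eq_square)
    also have "\<dots> \<le> (1/4) * (1/4)" using a by (intro mult_mono) auto
    finally show ?thesis using z1 by simp
  qed
  define G where "G t = P t * exp (- 4 * Sp t)" for t
  have dG: "(G has_real_derivative
      ((4 * (q t - Sp t) - 4 * (- (2 - q t) * (1 + Sp t) + (9/2) * (N1 t)^2 - (9/2) * Z t)) * G t)) (at t)" for t
  proof -
    have D: "(G has_real_derivative
       (((q t - 4 * Sp t) * N1 t * N1 t * N2 t * N3 t
        + N1 t * ((q t - 4 * Sp t) * N1 t) * N2 t * N3 t
        + N1 t * N1 t * ((q t + 2 * Sp t + 2 * sqrt 3 * Sm t) * N2 t) * N3 t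
        + N1 t * N1 t * N2 t * ((q t + 2 * Sp t - 2 * sqrt 3 * Sm t) * N3 t)) * exp (- 4 * Sp t)
        + P t * (exp (- 4 * Sp t) * (- 4 * (- (2 - q t) * (1 + Sp t) + (9/2) * (N1 t)^2 - (9/2) * Z t)))))
       (at t)"
      unfolding G_def P_def by (auto intro!: derivative_eq_intros d1 d2 d3 dsp simp: algebra_simps)
    have E: "((q t - 4 * Sp t) * N1 t * N1 t * N2 t * N3 t
        + N1 t * ((q t - 4 * Sp t) * N1 t) * N2 t * N3 t
        + N1 t * N1 t * ((q t + 2 * Sp t + 2 * sqrt 3 * Sm t) * N2 t) * N3 t
        + N1 t * N1 t * N2 t * ((q t + 2 * Sp t - 2 * sqrt 3 * Sm t) * N3 t)) = 4 * (q t - Sp t) * P t"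
      unfolding P_def by (simp add: algebra_simps)
    have F: "4 * (q t - Sp t) * P t * exp (- 4 * Sp t)
        + P t * (exp (- 4 * Sp t) * (- 4 * (- (2 - q t) * (1 + Sp t) + (9/2) * (N1 t)^2 - (9/2) * Z t)))
      = (4 * (q t - Sp t) - 4 * (- (2 - q t) * (1 + Sp t) + (9/2) * (N1 t)^2 - (9/2) * Z t)) * G t"
      unfolding G_def by (simp only: ring_distribs mult.assoc mult.commute mult.left_commute)
    show ?thesis using D unfolding E F .
  qed
  have Ppos: "P t > 0" for t using PR[of t] Rpos[of t] n1[of t] by (simp add: mult_neg_pos)
  have Gpos: "G t > 0" for t unfolding G_def using Ppos[of t] by simp
  have Gmono: "G T0 \<le> G t" if "T0 \<le> t" for t
    using that
  proof (rule DERIV_nonneg_imp_nondecreasing)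
    fix x assume x: "T0 \<le> x"
    have "4 * (q x - Sp x) - 4 * (- (2 - q x) * (1 + Sp x) + (9/2) * (N1 x)^2 - (9/2) * Z x) \<ge> 0"
    proof -
      obtain A where A: "A = (2 - q x) * (1 + Sp x)" by blast
      have "Z x \<ge> -1/9" "(N1 x)^2 \<le> 1/16" using small[OF x] by auto
      moreover have eA: "- (2 - q x) * (1 + Sp x) = - A" using A by (simp add: algebra_simps)
      moreover have "1 - A \<le> q x - Sp x" using key[of x] A by simp
      ultimately show ?thesis unfolding eA by (simp add: algebra_simps)
    qed
    then show "\<exists>y. (G has_real_derivative y) (at x) \<and> 0 \<le> y"
      using dG[of x] Gpos[of x] by (intro exI conjI) (auto intro!: mult_nonneg_nonneg)
  qed
  define c where "c = G T0 * exp (-4)"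
  have cpos: "c > 0" unfolding c_def using Gpos by simp
  have Plow: "c \<le> P t" if "T0 \<le> t" for t
  proof -
    have "P t = G t * exp (4 * Sp t)" unfolding G_def by (simp add: exp_minus_inverse mult.assoc flip: exp_add)
    moreover have e: "exp (-4) \<le> exp (4 * Sp t)" using spb[of t] by simp
    moreover have "G T0 * exp (-4) \<le> G t * exp (4 * Sp t)"
      using mult_mono[OF Gmono[OF that] e] Gpos[of t] by simp
    ultimately show ?thesis unfolding c_def by simp
  qed
  from lim have "eventually (\<lambda>t. \<bar>Z t\<bar> < sqrt c) at_top"
    unfolding Z_def using cpos by (auto dest!: tendstoD[where e="sqrt c"] simp: dist_real_def)
  then obtain T2 where T2: "\<And>t. t \<ge> T2 \<Longrightarrow> \<bar>Z t\<bar> < sqrt c"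
    by (auto simp: eventually_at_top_linorder)
  define t where "t = max T0 T2"
  have "\<bar>Z t\<bar> < sqrt c" using T2 unfolding t_def by auto
  then have "(Z t)^2 < c" using cpos
    by (metis abs_ge_zero real_sqrt_abs real_sqrt_less_iff)
  moreover have "c \<le> P t" using Plow unfolding t_def by auto
  ultimately show False using PZ[of t] cpos by simp
qed

end
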